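(* Let $X$ and $Y$ be Banach spaces and let $T\in B(X)$ and $S\in B(Y)$ be equivalent after extension. If $S$ is compact, then there exists a closed subspace of $Y$ of finite codimension that is topologically isomorphic to a closed subspace of $X$.
   Context: All Banach spaces are complex; $B(X,Y)$ denotes bounded linear operators; invertibility means bounded inverse; $X\oplus Y$ is the $\ell^2$-direct sum and $\mathrm{id}_X$ the identity. Operators $T\in B(X)$ and $S\in B(Y)$ are equivalent after extension if there exist Banach spaces $X'$, $Y'$ and invertible $E\in B(Y\oplus Y',X\oplus X')$, $F\in B(X\oplus X',Y\oplus Y')$ with $\begin{bmatrix}T&0\\0&\mathrm{id}_{X'}\end{bmatrix}=E\begin{bmatrix}S&0\\0&\mathrm{id}_{Y'}\end{bmatrix}F$. *)

theory Defs
  imports "HOL-Analysis.Analysis"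
begin

class complex_vector = real_vector +
  fixes scaleC :: "complex \<Rightarrow> 'a \<Rightarrow> 'a" (infixr "*\<^sub>C" 75)
  assumes scaleC_add_right: "a *\<^sub>C (x + y) = a *\<^sub>C x + a *\<^sub>C y"
    and scaleC_add_left: "(a + b) *\<^sub>C x = a *\<^sub>C x + b *\<^sub>C x"
    and scaleC_scaleC: "a *\<^sub>C (b *\<^sub>C x) = (a * b) *\<^sub>C x"
    and scaleC_one: "1 *\<^sub>C x = x"
    and scaleR_scaleC: "scaleR r x = complex_of_real r *\<^sub>C x"

class complex_normed_vector = complex_vector + real_normed_vector +
  assumes norm_scaleC: "norm (a *\<^sub>C x) = cmod a * norm x"

text \<open>Direct sums: the product type carries the l2-norm (norm_prod_def);
  complex scalars act componentwise.\<close>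

instantiation prod :: (complex_vector, complex_vector) complex_vector
begin
definition scaleC_prod_def: "a *\<^sub>C x = (a *\<^sub>C fst x, a *\<^sub>C snd x)"
instance
  by standard (auto simp: scaleC_prod_def scaleC_add_right scaleC_add_left
      scaleC_scaleC scaleR_scaleC complex_vector_class.scaleC_one prod_eq_iff)
end

instance prod :: (complex_normed_vector, complex_normed_vector) complex_normed_vector
proof
  fix a :: complex and x :: "'a \<times> 'b"
  have "norm (a *\<^sub>C x) = sqrt ((cmod a)\<^sup>2 * ((norm (fst x))\<^sup>2 + (norm (snd x))\<^sup>2))"
    by (simp add: norm_prod_def scaleC_prod_def norm_scaleC power_mult_distrib algebra_simps)
  also have "\<dots> = cmod a * norm x"
    by (simp add: norm_prod_def real_sqrt_mult)
  finally show "norm (a *\<^sub>C x) = cmod a * norm x" .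
qed

definition clinear :: "('a::complex_vector \<Rightarrow> 'b::complex_vector) \<Rightarrow> bool" where
  "clinear f \<longleftrightarrow> (\<forall>x y. f (x + y) = f x + f y) \<and> (\<forall>c x. f (c *\<^sub>C x) = c *\<^sub>C f x)"

definition bounded_clinear ::
  "('a::complex_normed_vector \<Rightarrow> 'b::complex_normed_vector) \<Rightarrow> bool" where
  "bounded_clinear f \<longleftrightarrow> clinear f \<and> (\<exists>K. \<forall>x. norm (f x) \<le> norm x * K)"

definition invertible_op ::
  "('a::complex_normed_vector \<Rightarrow> 'b::complex_normed_vector) \<Rightarrow> bool" where
  "invertible_op f \<longleftrightarrow> bounded_clinear f \<and>
     (\<exists>g. bounded_clinear g \<and> (\<forall>x. g (f x) = x) \<and> (\<forall>y. f (g y) = y))"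

definition compact_op ::
  "('a::complex_normed_vector \<Rightarrow> 'b::complex_normed_vector) \<Rightarrow> bool" where
  "compact_op f \<longleftrightarrow> bounded_clinear f \<and> (\<forall>B. bounded B \<longrightarrow> compact (closure (f ` B)))"

definition csubspace :: "'a::complex_vector set \<Rightarrow> bool" where
  "csubspace M \<longleftrightarrow> 0 \<in> M \<and> (\<forall>x\<in>M. \<forall>y\<in>M. x + y \<in> M) \<and> (\<forall>c. \<forall>x\<in>M. c *\<^sub>C x \<in> M)"

text \<open>Finite codimension: some finite set spans a complement modulo M, i.e. Y/M is finite-dimensional.\<close>
definition finite_codim :: "'a::complex_vector set \<Rightarrow> bool" where
  "finite_codim M \<longleftrightarrow> (\<exists>F. finite F \<and>
     (\<forall>y. \<exists>m\<in>M. \<exists>c. y = m + (\<Sum>f\<in>F. c f *\<^sub>C f)))"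

definition top_isomorphic ::
  "'a::complex_normed_vector set \<Rightarrow> 'b::complex_normed_vector set \<Rightarrow> bool" where
  "top_isomorphic M N \<longleftrightarrow> (\<exists>\<phi> \<psi>. homeomorphism M N \<phi> \<psi> \<and>
     (\<forall>x\<in>M. \<forall>y\<in>M. \<phi> (x + y) = \<phi> x + \<phi> y) \<and> (\<forall>c. \<forall>x\<in>M. \<phi> (c *\<^sub>C x) = c *\<^sub>C \<phi> x))"

end

theory Submission
  imports Defs
begin


definition lgraph :: "'a::real_normed_vector \<Rightarrow> ('a \<times> real) set \<Rightarrow> bool" where
  "lgraph v G \<longleftrightarrow> (\<forall>x a y b. (x,a)\<in>G \<longrightarrow> (y,b)\<in>G \<longrightarrow> (x+y, a+b)\<in>G) \<and>
     (\<forall>x a r. (x,a)\<in>G \<longrightarrow> (r *\<^sub>R x, r*a)\<in>G) \<and> (\<forall>x a. (x,a)\<in>G \<longrightarrow> a \<le> norm x) \<and> (v, norm v) \<in> G"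

lemma lgraphD:
  assumes "lgraph v G"
  shows "\<And>x a y b. (x,a)\<in>G \<Longrightarrow> (y,b)\<in>G \<Longrightarrow> (x+y, a+b)\<in>G"
    and "\<And>x a r. (x,a)\<in>G \<Longrightarrow> (r *\<^sub>R x, r*a)\<in>G"
    and "\<And>x a. (x,a)\<in>G \<Longrightarrow> a \<le> norm x" and "(v, norm v) \<in> G"
  using assms unfolding lgraph_def by blast+

lemma lgraph_fun:
  assumes "lgraph v G" "(x,a)\<in>G" "(x,b)\<in>G" shows "a = b"
proof -
  have "((-1) *\<^sub>R x, (-1)*b) \<in> G" using lgraphD(2)[OF assms(1) assms(3)] .
  then have "(x + (-1) *\<^sub>R x, a + (-1)*b) \<in> G" using lgraphD(1)[OF assms(1) assms(2)] by blast
  then have 1: "a - b \<le> 0" using lgraphD(3)[OF assms(1)] by fastforce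
  have "((-1) *\<^sub>R x, (-1)*a) \<in> G" using lgraphD(2)[OF assms(1) assms(2)] .
  then have "(x + (-1) *\<^sub>R x, b + (-1)*a) \<in> G" using lgraphD(1)[OF assms(1) assms(3)] by blast
  then have 2: "b - a \<le> 0" using lgraphD(3)[OF assms(1)] by fastforce
  from 1 2 show ?thesis by simp
qed

lemma sep_real:
  fixes A B :: "real set"
  assumes "A \<noteq> {}" "B \<noteq> {}" "\<And>a b. a \<in> A \<Longrightarrow> b \<in> B \<Longrightarrow> a \<le> b"
  shows "\<exists>c. (\<forall>a\<in>A. a \<le> c) \<and> (\<forall>b\<in>B. c \<le> b)"
proof -
  obtain b0 where "b0 \<in> B" using assms by auto
  then have bdd: "bdd_above A" using assms(3) by (auto simp: bdd_above_def)
  show ?thesis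
    by (rule exI[of _ "Sup A"]) (use assms bdd in \<open>auto intro: cSup_upper cSup_least\<close>)
qed

lemma lgraph_extend:
  fixes v :: "'a::real_normed_vector"
  assumes G: "lgraph v G" and z: "\<forall>a. (z,a) \<notin> G"
  shows "\<exists>G'. lgraph v G' \<and> G \<subseteq> G' \<and> G' \<noteq> G"
proof -
  have add: "\<And>x a y b. (x,a)\<in>G \<Longrightarrow> (y,b)\<in>G \<Longrightarrow> (x+y, a+b)\<in>G"
    and sc: "\<And>x a r. (x,a)\<in>G \<Longrightarrow> (r *\<^sub>R x, r*a)\<in>G"
    and dom: "\<And>x a. (x,a)\<in>G \<Longrightarrow> a \<le> norm x" and vG: "(v, norm v) \<in> G"
    using lgraphD[OF G] by blast+
  have zero: "(0, 0) \<in> G" using sc[OF vG, of 0] by simp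
  define A where "A = {a - norm (x - z) | x a. (x,a)\<in>G}"
  define B where "B = {norm (y + z) - b | y b. (y,b)\<in>G}"
  have "\<exists>c. (\<forall>a\<in>A. a \<le> c) \<and> (\<forall>b\<in>B. c \<le> b)"
  proof (rule sep_real)
    show "A \<noteq> {}" "B \<noteq> {}" using zero unfolding A_def B_def by blast+
  next
    fix p q assume "p \<in> A" "q \<in> B"
    then obtain x a y b where p: "p = a - norm (x - z)" "(x,a)\<in>G" and q: "q = norm (y+z) - b" "(y,b)\<in>G"
      unfolding A_def B_def by blast
    have "a + b \<le> norm (x + y)" using dom[OF add[OF p(2) q(2)]] .
    also have "x + y = (x - z) + (y + z)" by simp
    also have "norm \<dots> \<le> norm (x - z) + norm (y + z)" by (rule norm_triangle_ineq)
    finally show "p \<le> q" using p q by simp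
  qed
  then obtain c where c1: "\<forall>a\<in>A. a \<le> c" and c2: "\<forall>b\<in>B. c \<le> b" by blast
  have cA: "a - norm (x - z) \<le> c" if "(x,a)\<in>G" for x a
  proof -
    have "a - norm (x - z) \<in> A" unfolding A_def using that by blast
    then show ?thesis using c1 by blast
  qed
  have cB: "c \<le> norm (x + z) - a" if "(x,a)\<in>G" for x a
  proof -
    have "norm (x + z) - a \<in> B" unfolding B_def using that by blast
    then show ?thesis using c2 by blast
  qed
  define G' where "G' = {(x + t *\<^sub>R z, a + t*c) | x a t. (x,a)\<in>G}"
  have memE: "\<exists>x1 a1 t. (x1,a1)\<in>G \<and> x = x1 + t *\<^sub>R z \<and> a = a1 + t*c" if "(x,a)\<in>G'" for x a
    using that unfolding G'_def by blast
  have memI: "(x1 + t *\<^sub>R z, a1 + t*c) \<in> G'" if "(x1,a1)\<in>G" for x1 a1 t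
    using that unfolding G'_def by blast
  have "lgraph v G'"
    unfolding lgraph_def
  proof (intro conjI allI impI)
    fix x a y b assume "(x,a)\<in>G'" "(y,b)\<in>G'"
    then obtain x1 a1 t1 x2 a2 t2 where "(x1,a1)\<in>G" "(x2,a2)\<in>G" "x = x1 + t1 *\<^sub>R z" "a = a1 + t1*c"
      "y = x2 + t2 *\<^sub>R z" "b = a2 + t2*c" using memE by metis
    moreover have "(x1+x2 + (t1+t2) *\<^sub>R z, a1+a2 + (t1+t2)*c) \<in> G'"
      by (rule memI, rule add) fact+
    ultimately show "(x+y, a+b) \<in> G'" by (simp add: algebra_simps)
  next
    fix x a r assume "(x,a)\<in>G'"
    then obtain x1 a1 t1 where "(x1,a1)\<in>G" "x = x1 + t1 *\<^sub>R z" "a = a1 + t1*c"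
      using memE by metis
    moreover have "(r *\<^sub>R x1 + (r*t1) *\<^sub>R z, r*a1 + (r*t1)*c) \<in> G'"
      by (rule memI, rule sc) fact
    ultimately show "(r *\<^sub>R x, r*a) \<in> G'" by (simp add: algebra_simps)
  next
    fix x a assume "(x,a)\<in>G'"
    then obtain x1 a1 t where x1: "(x1,a1)\<in>G" and xa: "x = x1 + t *\<^sub>R z" "a = a1 + t*c"
      using memE by metis
    consider "t = 0" | "t > 0" | "t < 0" by linarith
    then show "a \<le> norm x"
    proof cases
      case 1 then show ?thesis using dom[OF x1] xa by simp
    next
      case 2
      have "c \<le> norm ((1/t) *\<^sub>R x1 + z) - (1/t)*a1" using cB[OF sc[OF x1, of "1/t"]] .
      also have "(1/t) *\<^sub>R x1 + z = (1/t) *\<^sub>R x" using 2 xa by (simp add: algebra_simps)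
      also have "norm ((1/t) *\<^sub>R x) = (1/t) * norm x" using 2 by simp
      finally have "t * c \<le> t * ((1/t) * norm x - (1/t)*a1)" using 2 by (simp add: mult_left_mono)
      also have "\<dots> = norm x - a1" using 2 by (simp add: field_simps)
      finally show ?thesis using xa by simp
    next
      case 3
      define s where "s = -t"
      have s: "s > 0" using 3 s_def by simp
      have "(1/s)*a1 - norm ((1/s) *\<^sub>R x1 - z) \<le> c" using cA[OF sc[OF x1, of "1/s"]] .
      also have "(1/s) *\<^sub>R x1 - z = (1/s) *\<^sub>R x" using s xa s_def by (simp add: algebra_simps)
      also have "norm ((1/s) *\<^sub>R x) = (1/s) * norm x" using s by simp
      finally have "s * ((1/s)*a1 - (1/s) * norm x) \<le> s * c" using s by (simp add: mult_left_mono)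
      moreover have "s * ((1/s)*a1 - (1/s) * norm x) = a1 - norm x" using s by (simp add: field_simps)
      ultimately show ?thesis using xa s_def by simp
    qed
  next
    show "(v, norm v) \<in> G'" using memI[OF vG, of 0] by simp
  qed
  moreover have "G \<subseteq> G'" using memI[of _ _ 0] by auto
  moreover have "(z, c) \<in> G'" using memI[OF zero, of 1] by simp
  ultimately show ?thesis using z by blast
qed

lemma hb_real:
  fixes v :: "'a::real_normed_vector"
  shows "\<exists>g. (\<forall>x y. g (x + y) = g x + g y) \<and> (\<forall>r x. g (r *\<^sub>R x) = r * g x) \<and>
     g v = norm v \<and> (\<forall>x. g x \<le> norm x)"
proof -
  define A where "A = {G. lgraph v G}"
  define G0 where "G0 = {(r *\<^sub>R v, r * norm v) | r. True}"
  have G0: "lgraph v G0" unfolding lgraph_def G0_def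
  proof (intro conjI allI impI)
    fix x a y b assume "(x, a) \<in> {(r *\<^sub>R v, r * norm v) |r. True}" "(y, b) \<in> {(r *\<^sub>R v, r * norm v) |r. True}"
    then obtain r s where "x = r *\<^sub>R v" "a = r * norm v" "y = s *\<^sub>R v" "b = s * norm v" by blast
    then show "(x + y, a + b) \<in> {(r *\<^sub>R v, r * norm v) |r. True}"
      by (intro CollectI exI[of _ "r+s"]) (simp add: algebra_simps)
  next
    fix x a r assume "(x, a) \<in> {(r *\<^sub>R v, r * norm v) |r. True}"
    then obtain s where "x = s *\<^sub>R v" "a = s * norm v" by blast
    then show "(r *\<^sub>R x, r * a) \<in> {(r *\<^sub>R v, r * norm v) |r. True}"
      by (intro CollectI exI[of _ "r * s"]) (simp add: algebra_simps)
  next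
    fix x a assume "(x, a) \<in> {(r *\<^sub>R v, r * norm v) |r. True}"
    then obtain s where "x = s *\<^sub>R v" "a = s * norm v" by blast
    then show "a \<le> norm x" by (auto intro!: mult_right_mono)
  next
    show "(v, norm v) \<in> {(r *\<^sub>R v, r * norm v) |r. True}" by (intro CollectI exI[of _ 1]) simp
  qed
  have "\<forall>C\<in>chains A. \<exists>U\<in>A. \<forall>X\<in>C. X \<subseteq> U"
  proof
    fix C assume C: "C \<in> chains A"
    show "\<exists>U\<in>A. \<forall>X\<in>C. X \<subseteq> U"
    proof (cases "C = {}")
      case True then show ?thesis using G0 A_def by auto
    next
      case False
      have CA: "\<And>X. X \<in> C \<Longrightarrow> lgraph v X" using C unfolding chains_def A_def by auto
      have ch: "\<And>X Y. X \<in> C \<Longrightarrow> Y \<in> C \<Longrightarrow> X \<subseteq> Y \<or> Y \<subseteq> X"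
        using C unfolding chains_def chain_subset_def by auto
      have "lgraph v (\<Union>C)" unfolding lgraph_def
      proof (intro conjI allI impI)
        fix x a y b assume "(x,a) \<in> \<Union>C" "(y,b) \<in> \<Union>C"
        then obtain X Y where XY: "X\<in>C" "Y\<in>C" "(x,a)\<in>X" "(y,b)\<in>Y" by blast
        from ch[OF XY(1,2)] show "(x+y,a+b) \<in> \<Union>C"
        proof
          assume "X \<subseteq> Y" then show ?thesis using XY lgraphD(1)[OF CA[OF XY(2)], of x a y b] by blast
        next
          assume "Y \<subseteq> X" then show ?thesis using XY lgraphD(1)[OF CA[OF XY(1)], of x a y b] by blast
        qed
      next
        fix x a r assume "(x,a) \<in> \<Union>C" then show "(r *\<^sub>R x, r * a) \<in> \<Union>C"
          using CA lgraphD(2) by blast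
      next
        fix x a assume "(x,a) \<in> \<Union>C" then show "a \<le> norm x"
          using CA lgraphD(3) by blast
      next
        show "(v, norm v) \<in> \<Union>C" using False CA lgraphD(4) by blast
      qed
      then show ?thesis unfolding A_def by blast
    qed
  qed
  from Zorn_Lemma2[OF this] obtain G where GA: "G \<in> A" and max: "\<And>X. X \<in> A \<Longrightarrow> G \<subseteq> X \<Longrightarrow> X = G"
    by blast
  have G: "lgraph v G" using GA A_def by simp
  have tot: "\<forall>x. \<exists>a. (x,a)\<in>G"
  proof (rule ccontr)
    assume "\<not> ?thesis"
    then obtain z where "\<forall>a. (z,a) \<notin> G" by blast
    from lgraph_extend[OF G this] obtain G' where "lgraph v G'" "G \<subseteq> G'" "G' \<noteq> G" by blast
    then show False using max[of G'] A_def by auto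
  qed
  define g where "g x = (THE a. (x,a)\<in>G)" for x
  have gG: "(x, g x) \<in> G" for x unfolding g_def
    using tot lgraph_fun[OF G] by (metis theI)
  have geq: "(x,a) \<in> G \<Longrightarrow> g x = a" for x a using lgraph_fun[OF G _ gG] by metis
  show ?thesis
  proof (intro exI[of _ g] conjI allI)
    fix x y show "g (x+y) = g x + g y" using geq[OF lgraphD(1)[OF G gG gG]] by simp
  next
    fix r x show "g (r *\<^sub>R x) = r * g x" using geq[OF lgraphD(2)[OF G gG]] by simp
  next
    show "g v = norm v" using geq[OF lgraphD(4)[OF G]] .
  next
    fix x show "g x \<le> norm x" using lgraphD(3)[OF G gG] .
  qed
qed



lemma scaleC_zero_left[simp]: "(0::complex) *\<^sub>C (x::'a::complex_vector) = 0"
  using scaleR_scaleC[of 0 x] by simp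

lemma scaleC_zero_right[simp]: "(a::complex) *\<^sub>C (0::'a::complex_vector) = 0"
proof -
  have "a *\<^sub>C (0::'a) = a *\<^sub>C 0 + a *\<^sub>C 0" using scaleC_add_right[of a "0::'a" 0] by simp
  then show ?thesis by simp
qed

lemma scaleC_of_real: "complex_of_real r *\<^sub>C (x::'a::complex_vector) = r *\<^sub>R x"
  using scaleR_scaleC by metis

definition cfunc :: "('a::complex_vector \<Rightarrow> complex) \<Rightarrow> bool" where
  "cfunc f \<longleftrightarrow> (\<forall>x y. f (x + y) = f x + f y) \<and> (\<forall>c x. f (c *\<^sub>C x) = c * f x)"

lemma clinear_linear: "clinear f \<Longrightarrow> linear f"
  unfolding clinear_def
  by (rule linearI) (auto simp: scaleR_scaleC)

lemma bcl_bl: "bounded_clinear f \<Longrightarrow> bounded_linear f"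
  unfolding bounded_clinear_def clinear_def
  by (auto intro!: bounded_linear_intro simp: scaleR_scaleC)

lemma scaleC_decomp: "a *\<^sub>C (x::'a::complex_vector) = Re a *\<^sub>R x + Im a *\<^sub>R (\<i> *\<^sub>C x)"
proof -
  have "a = complex_of_real (Re a) + complex_of_real (Im a) * \<i>" by (simp add: complex_eq_iff)
  then have "a *\<^sub>C x = (complex_of_real (Re a) + complex_of_real (Im a) * \<i>) *\<^sub>C x" by simp
  also have "\<dots> = Re a *\<^sub>R x + Im a *\<^sub>R (\<i> *\<^sub>C x)"
    by (simp add: scaleC_add_left scaleC_scaleC[symmetric] scaleR_scaleC)
  finally show ?thesis .
qed

lemma hb_complex:
  fixes v :: "'a::complex_normed_vector"
  shows "\<exists>\<phi>. cfunc \<phi> \<and> (\<forall>x. Re (\<phi> x) \<le> norm x) \<and> Re (\<phi> v) = norm v \<and> continuous_on UNIV \<phi>"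
proof -
  obtain g :: "'a \<Rightarrow> real" where gadd: "\<And>x y. g (x + y) = g x + g y" and gsc: "\<And>r x. g (r *\<^sub>R x) = r * g x"
    and gv: "g v = norm v" and gle: "\<And>x. g x \<le> norm x"
    using hb_real[of v] by blast
  have gbl: "bounded_linear g"
  proof (rule bounded_linear_intro[where K=1])
    fix x
    have "- g x = g ((-1) *\<^sub>R x)" using gsc[of "-1" x] by simp
    also have "\<dots> \<le> norm x" using gle[of "(-1) *\<^sub>R x"] by simp
    finally show "norm (g x) \<le> norm x * 1" using gle[of x] by simp
  qed (auto simp: gadd gsc)
  have ibl: "bounded_linear (\<lambda>x::'a. \<i> *\<^sub>C x)"
  proof (rule bounded_linear_intro[where K=1])
    fix r x show "\<i> *\<^sub>C (r *\<^sub>R (x::'a)) = r *\<^sub>R (\<i> *\<^sub>C x)"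
      by (simp add: scaleR_scaleC scaleC_scaleC mult.commute)
  qed (auto simp: scaleC_add_right norm_scaleC)
  have gsc2: "g (a *\<^sub>C x) = Re a * g x + Im a * g (\<i> *\<^sub>C x)" for a x
    by (subst scaleC_decomp[of a x]) (simp only: gadd gsc)
  define \<phi> where "\<phi> x = complex_of_real (g x) - \<i> * complex_of_real (g (\<i> *\<^sub>C x))" for x
  have "cfunc \<phi>" unfolding cfunc_def
  proof (intro conjI allI)
    fix x y show "\<phi> (x + y) = \<phi> x + \<phi> y" by (simp add: \<phi>_def gadd scaleC_add_right algebra_simps)
  next
    fix c x
    have e1: "g (\<i> *\<^sub>C (c *\<^sub>C x)) = - Im c * g x + Re c * g (\<i> *\<^sub>C x)"
      using gsc2[of "\<i>*c" x] by (simp add: scaleC_scaleC)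
    show "\<phi> (c *\<^sub>C x) = c * \<phi> x"
      unfolding \<phi>_def e1 gsc2[of c x] by (simp add: complex_eq_iff algebra_simps)
  qed
  moreover have "\<forall>x. Re (\<phi> x) \<le> norm x" by (simp add: \<phi>_def gle)
  moreover have "Re (\<phi> v) = norm v" by (simp add: \<phi>_def gv)
  moreover have "continuous_on UNIV \<phi>"
  proof -
    have c1: "continuous_on UNIV g" using gbl by (rule linear_continuous_on)
    have c2: "continuous_on UNIV (\<lambda>x. g (\<i> *\<^sub>C x))"
      using bounded_linear_compose[OF gbl ibl] by (rule linear_continuous_on)
    have c3: "continuous_on UNIV (\<lambda>x. complex_of_real (g x))" by (rule continuous_on_of_real[OF c1])
    have c4: "continuous_on UNIV (\<lambda>x. complex_of_real (g (\<i> *\<^sub>C x)))" by (rule continuous_on_of_real[OF c2])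
    have c5: "continuous_on UNIV (\<lambda>x. \<i> * complex_of_real (g (\<i> *\<^sub>C x)))"
      by (rule continuous_on_mult[OF continuous_on_const c4])
    show ?thesis unfolding \<phi>_def by (rule continuous_on_diff[OF c3 c5])
  qed
  ultimately show ?thesis by blast
qed



lemma cfunc_zero: "cfunc f \<Longrightarrow> f 0 = 0"
  unfolding cfunc_def by (metis add_cancel_right_right add_0)

lemma csub_comb: "csubspace M \<Longrightarrow> x \<in> M \<Longrightarrow> y \<in> M \<Longrightarrow> x + c *\<^sub>C y \<in> M"
  unfolding csubspace_def by blast

lemma finite_codim_UNIV: "finite_codim UNIV"
  unfolding finite_codim_def by (rule exI[of _ "{}"]) auto

lemma finite_codim_inter:
  assumes M: "csubspace M" and fc: "finite_codim M" and psi: "cfunc \<psi>"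
  shows "finite_codim (M \<inter> {y. \<psi> y = 0})"
proof (cases "\<forall>m\<in>M. \<psi> m = 0")
  case True
  then have "M \<inter> {y. \<psi> y = 0} = M" by auto
  then show ?thesis using fc by simp
next
  case False
  then obtain u0 where u0: "u0 \<in> M" "\<psi> u0 \<noteq> 0" by blast
  define u where "u = (1 / \<psi> u0) *\<^sub>C u0"
  have uM: "u \<in> M" using csub_comb[OF M _ u0(1), of 0 "1 / \<psi> u0"] M unfolding csubspace_def u_def
    by simp
  have pu: "\<psi> u = 1" using psi u0(2) unfolding cfunc_def u_def by simp
  obtain F where F: "finite F" and Fsp: "\<forall>y. \<exists>m\<in>M. \<exists>c. y = m + (\<Sum>f\<in>F. c f *\<^sub>C f)"
    using fc unfolding finite_codim_def by blast
  show ?thesis unfolding finite_codim_def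
  proof (intro exI[of _ "insert u F"] conjI allI)
    show "finite (insert u F)" using F by simp
  next
    fix y
    obtain m c where m: "m \<in> M" and y: "y = m + (\<Sum>f\<in>F. c f *\<^sub>C f)" using Fsp by blast
    define m' where "m' = m + (- \<psi> m) *\<^sub>C u"
    have m'M: "m' \<in> M" unfolding m'_def by (rule csub_comb[OF M m uM])
    have pm': "\<psi> m' = 0" using psi pu unfolding m'_def cfunc_def by simp
    define c' where "c' f = (if f \<in> F then c f else 0) + (if f = u then \<psi> m else 0)" for f
    have s1: "(\<Sum>f\<in>insert u F. (if f \<in> F then c f else 0) *\<^sub>C f) = (\<Sum>f\<in>F. c f *\<^sub>C f)"
      by (rule sum.mono_neutral_cong_right) (use F in auto)
    have s2: "(\<Sum>f\<in>insert u F. (if f = u then \<psi> m else 0) *\<^sub>C f) = \<psi> m *\<^sub>C u"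
    proof -
      have "(\<Sum>f\<in>insert u F. (if f = u then \<psi> m else 0) *\<^sub>C f) = (\<Sum>f\<in>insert u F. if f = u then \<psi> m *\<^sub>C u else 0)"
        by (rule sum.cong) auto
      also have "\<dots> = \<psi> m *\<^sub>C u" using F by simp
      finally show ?thesis .
    qed
    have "(\<Sum>f\<in>insert u F. c' f *\<^sub>C f) = (\<Sum>f\<in>F. c f *\<^sub>C f) + \<psi> m *\<^sub>C u"
      unfolding c'_def scaleC_add_left sum.distrib s1 s2 ..
    moreover have "m = m' + \<psi> m *\<^sub>C u"
      unfolding m'_def by (simp add: add.assoc scaleC_add_left[symmetric])
    ultimately have "y = m' + (\<Sum>f\<in>insert u F. c' f *\<^sub>C f)" using y by (simp add: algebra_simps)
    then show "\<exists>m\<in>M \<inter> {y. \<psi> y = 0}. \<exists>c. y = m + (\<Sum>f\<in>insert u F. c f *\<^sub>C f)"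
      using m'M pm' by blast
  qed
qed

lemma finite_codim_Inter:
  assumes "finite k" "\<And>w. w \<in> k \<Longrightarrow> cfunc (\<psi> w)"
  shows "finite_codim {y. \<forall>w\<in>k. \<psi> w y = 0} \<and> csubspace {y. \<forall>w\<in>k. \<psi> w y = 0}"
  using assms
proof (induction k rule: finite_induct)
  case empty
  then show ?case using finite_codim_UNIV by (simp add: csubspace_def)
next
  case (insert w k)
  have eq: "{y. \<forall>w'\<in>insert w k. \<psi> w' y = 0} = {y. \<forall>w\<in>k. \<psi> w y = 0} \<inter> {y. \<psi> w y = 0}" by auto
  have IH: "finite_codim {y. \<forall>w\<in>k. \<psi> w y = 0}" "csubspace {y. \<forall>w\<in>k. \<psi> w y = 0}"
    using insert by auto
  have pw: "cfunc (\<psi> w)" using insert by auto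
  have "csubspace {y. \<forall>w'\<in>insert w k. \<psi> w' y = 0}"
    using insert.prems unfolding csubspace_def cfunc_def
    by (auto simp: cfunc_zero[unfolded cfunc_def])
  then show ?case using finite_codim_inter[OF IH(2) IH(1) pw] eq by simp
qed



theorem theorem5p3:
  fixes T :: "'x::{complex_normed_vector,banach} \<Rightarrow> 'x"
    and S :: "'y::{complex_normed_vector,banach} \<Rightarrow> 'y"
    and E :: "'y \<times> 'y2::{complex_normed_vector,banach} \<Rightarrow> 'x \<times> 'x2::{complex_normed_vector,banach}"
    and F :: "'x \<times> 'x2 \<Rightarrow> 'y \<times> 'y2"
  assumes "bounded_clinear T" and "bounded_clinear S"
    and "invertible_op E" and "invertible_op F"
    and "\<forall>x x'. (T x, x') = E (case F (x, x') of (y, y') \<Rightarrow> (S y, y'))"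
    and "compact_op S"
  shows "\<exists>M :: 'y set. \<exists>N :: 'x set. csubspace M \<and> closed M \<and> finite_codim M \<and>
           csubspace N \<and> closed N \<and> top_isomorphic M N"
proof -
  obtain Fi where Fi: "bounded_clinear Fi" "\<And>x. Fi (F x) = x" "\<And>y. F (Fi y) = y"
    using assms(4) unfolding invertible_op_def by blast
  obtain KF where KF: "\<And>u. norm (F u) \<le> norm u * KF"
    using assms(4) unfolding invertible_op_def bounded_clinear_def by blast
  define C where "C = max KF 1"
  have C0: "C > 0" unfolding C_def by simp
  define J where "J y = fst (Fi (y, 0::'y2))" for y
  define K where "K y = snd (Fi (y, 0::'y2))" for y
  define L where "L u = snd (E (u, 0::'y2))" for u
  have FiJK: "Fi (y, 0) = (J y, K y)" for y unfolding J_def K_def by simp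
  have KL: "K y = L (S y)" for y
  proof -
    have "(T (J y), K y) = E (case F (J y, K y) of (y, y') \<Rightarrow> (S y, y'))" using assms(5) by blast
    also have "F (J y, K y) = (y, 0)" using Fi(3)[of "(y,0)"] FiJK by simp
    finally show ?thesis unfolding L_def by (metis snd_conv case_prod_conv)
  qed
  have lb: "norm y \<le> C * (norm (J y) + norm (K y))" for y
  proof -
    have "norm y = norm (F (Fi (y, 0::'y2)))" using Fi(3) by (simp add: norm_Pair)
    also have "\<dots> \<le> norm (Fi (y, 0::'y2)) * KF" by (rule KF)
    also have "\<dots> \<le> norm (Fi (y, 0::'y2)) * C" unfolding C_def by (intro mult_left_mono) auto
    also have "\<dots> \<le> (norm (J y) + norm (K y)) * C" unfolding FiJK using C0
      by (intro mult_right_mono norm_Pair_le) auto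
    finally show ?thesis by (simp add: mult.commute)
  qed
  have Fic: "clinear Fi" using Fi(1) unfolding bounded_clinear_def by blast
  have Fiadd: "Fi (a + b) = Fi a + Fi b" and Fisc: "Fi (c *\<^sub>C a) = c *\<^sub>C Fi a" for a b c
    using Fic unfolding clinear_def by blast+
  have Jc: "clinear J" unfolding clinear_def J_def
  proof (intro conjI allI)
    fix x y show "fst (Fi (x + y, 0::'y2)) = fst (Fi (x, 0::'y2)) + fst (Fi (y, 0::'y2))"
      using Fiadd[of "(x,0)" "(y,0)"] by simp
  next
    fix c x show "fst (Fi (c *\<^sub>C x, 0::'y2)) = c *\<^sub>C fst (Fi (x, 0::'y2))"
      using Fisc[of c "(x,0)"] by (simp add: scaleC_prod_def)
  qed
  have Kc: "clinear K" unfolding clinear_def K_def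
  proof (intro conjI allI)
    fix x y show "snd (Fi (x + y, 0::'y2)) = snd (Fi (x, 0::'y2)) + snd (Fi (y, 0::'y2))"
      using Fiadd[of "(x,0)" "(y,0)"] by simp
  next
    fix c x show "snd (Fi (c *\<^sub>C x, 0::'y2)) = c *\<^sub>C snd (Fi (x, 0::'y2))"
      using Fisc[of c "(x,0)"] by (simp add: scaleC_prod_def)
  qed
  have Fibl: "bounded_linear Fi" using bcl_bl[OF Fi(1)] .
  have pbl: "bounded_linear (\<lambda>y::'y. (y, 0::'y2))"
    by (intro bounded_linear_Pair bounded_linear_ident bounded_linear_zero)
  have Jbl: "bounded_linear J" unfolding J_def
    using bounded_linear_compose[OF bounded_linear_fst bounded_linear_compose[OF Fibl pbl]] by simp
  have Kbl: "bounded_linear K" unfolding K_def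
    using bounded_linear_compose[OF bounded_linear_snd bounded_linear_compose[OF Fibl pbl]] by simp
  have Ebl: "bounded_linear E" using assms(3) bcl_bl unfolding invertible_op_def by blast
  have Lbl: "bounded_linear L" unfolding L_def
    using bounded_linear_compose[OF bounded_linear_snd bounded_linear_compose[OF Ebl pbl]] by simp
  define B :: "'y set" where "B = cball 0 1"
  have cS: "compact (closure (S ` B))" using assms(6) unfolding compact_op_def B_def by auto
  define Q where "Q = L ` closure (S ` B)"
  have cQ: "compact Q" unfolding Q_def
    by (rule compact_continuous_image[OF linear_continuous_on[OF Lbl] cS])
  have KBQ: "K y \<in> Q" if "y \<in> B" for y
    unfolding Q_def KL using that closure_subset by blast
  define \<delta> where "\<delta> = 1 / (8 * C)"
  have d0: "\<delta> > 0" unfolding \<delta>_def using C0 by simp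
  obtain k where k: "finite k" "Q \<subseteq> (\<Union>x\<in>k. ball x \<delta>)"
    using cQ d0 unfolding compact_eq_totally_bounded by blast
  have "\<forall>w::'x2. \<exists>\<phi>. cfunc \<phi> \<and> (\<forall>x. Re (\<phi> x) \<le> norm x) \<and> Re (\<phi> w) = norm w \<and> continuous_on UNIV \<phi>"
    using hb_complex by blast
  from choice[OF this] obtain \<Phi> where \<Phi>': "\<forall>w::'x2. cfunc (\<Phi> w) \<and> (\<forall>x. Re (\<Phi> w x) \<le> norm x) \<and> Re (\<Phi> w w) = norm w \<and> continuous_on UNIV (\<Phi> w)"
    by blast
  have \<Phi>: "\<And>w. cfunc (\<Phi> w)" "\<And>w x. Re (\<Phi> w x) \<le> norm x" "\<And>w. Re (\<Phi> w w) = norm w"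
    "\<And>w. continuous_on UNIV (\<Phi> w)"
    using \<Phi>' by blast+
  define M where "M = {y. \<forall>w\<in>k. (\<Phi> w \<circ> K) y = 0}"
  have cfK: "cfunc (\<Phi> w \<circ> K)" for w
    using \<Phi>(1)[of w] Kc unfolding cfunc_def clinear_def by simp
  have M1: "finite_codim M" "csubspace M" unfolding M_def
    using finite_codim_Inter[OF k(1), of "\<lambda>w. \<Phi> w \<circ> K"] cfK by blast+
  have Mc: "closed M"
  proof -
    have "M = (\<Inter>w\<in>k. {y. (\<Phi> w \<circ> K) y = (\<lambda>_. 0) y})" unfolding M_def by auto
    moreover have "closed {y. (\<Phi> w \<circ> K) y = (\<lambda>_. 0) y}" for w
      by (rule closed_Collect_eq) (auto intro!: continuous_on_compose2[OF \<Phi>(4) linear_continuous_on[OF Kbl]])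
    ultimately show ?thesis by auto
  qed
  have Kadd: "K (a + b) = K a + K b" and Ksc: "K (r *\<^sub>R a) = r *\<^sub>R K a" for a b r
    using Kbl by (auto simp: linear_simps)
  have Msc: "r *\<^sub>R y \<in> M" if "y \<in> M" for y r
    using M1(2) that unfolding csubspace_def by (simp add: scaleR_scaleC)
  have small: "norm (K y) < 2 * \<delta>" if "y \<in> M" "norm y \<le> 1" for y
  proof -
    have "K y \<in> Q" using KBQ that unfolding B_def by simp
    then obtain w where w: "w \<in> k" "dist w (K y) < \<delta>" using k(2) by auto
    have z: "\<Phi> w (K y) = 0" using that w unfolding M_def by simp
    have "norm w = Re (\<Phi> w w) - Re (\<Phi> w (K y))" using \<Phi>(3) z by simp
    also have "\<dots> = Re (\<Phi> w (w - K y))"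
      using \<Phi>(1)[of w] unfolding cfunc_def by (metis diff_add_cancel plus_complex.sel(1) diff_add_eq eq_diff_eq)
    also have "\<dots> \<le> norm (w - K y)" by (rule \<Phi>(2))
    also have "\<dots> < \<delta>" using w(2) by (simp add: dist_norm)
    finally have "norm w < \<delta>" .
    moreover have "norm (K y) \<le> norm w + norm (K y - w)" by (metis norm_triangle_sub add.commute)
    moreover have "norm (K y - w) < \<delta>" using w(2) by (simp add: dist_norm norm_minus_commute)
    ultimately show ?thesis by simp
  qed
  have Ksmall: "norm (K y) \<le> 2 * \<delta> * norm y" if "y \<in> M" for y
  proof (cases "y = 0")
    case True then show ?thesis using Ksc[of 0 0] by simp
  next
    case False
    let ?y = "(1 / norm y) *\<^sub>R y"
    have "norm (K ?y) < 2 * \<delta>" using small[of ?y] Msc[OF that] False by simp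
    then have "(1 / norm y) * norm (K y) < 2 * \<delta>" using Ksc by simp
    then show ?thesis using False by (simp add: field_simps)
  qed
  have bound: "norm y \<le> 2 * C * norm (J y)" if "y \<in> M" for y
  proof -
    have e: "C * (2 * \<delta>) = 1 / 4" unfolding \<delta>_def using C0 by simp
    have "norm y \<le> C * norm (J y) + C * norm (K y)" using lb[of y] by (simp add: algebra_simps)
    also have "C * norm (K y) \<le> C * (2 * \<delta> * norm y)" using Ksmall[OF that] C0 by simp
    also have "C * (2 * \<delta> * norm y) = norm y / 4" using e by (simp add: algebra_simps)
    finally have "norm y \<le> (4/3) * (C * norm (J y))" by simp
    also have "\<dots> \<le> 2 * (C * norm (J y))" using C0 by (intro mult_right_mono) auto
    finally show ?thesis by simp
  qed
  define N where "N = J ` M"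
  have Jadd: "J (a + b) = J a + J b" and Jsc: "J (c *\<^sub>C a) = c *\<^sub>C J a" for a b c
    using Jc unfolding clinear_def by blast+
  have M0: "0 \<in> M" and Madd: "\<And>a b. a \<in> M \<Longrightarrow> b \<in> M \<Longrightarrow> a + b \<in> M"
    and MscC: "\<And>c a. a \<in> M \<Longrightarrow> c *\<^sub>C a \<in> M"
    using M1(2) unfolding csubspace_def by blast+
  have Nsub: "csubspace N" unfolding N_def csubspace_def
  proof (intro conjI ballI allI)
    have "J 0 = 0" using Jsc[of 0 0] by simp
    then show "0 \<in> J ` M" using M0 by (metis image_eqI)
  next
    fix x y assume "x \<in> J ` M" "y \<in> J ` M"
    then obtain a b where "a \<in> M" "b \<in> M" "x = J a" "y = J b" by blast
    then show "x + y \<in> J ` M" using Madd Jadd by (metis image_eqI)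
  next
    fix c x assume "x \<in> J ` M"
    then obtain a where "a \<in> M" "x = J a" by blast
    then show "c *\<^sub>C x \<in> J ` M" using MscC Jsc by (metis image_eqI)
  qed
  have Mrs: "subspace M"
    using M1(2) unfolding csubspace_def by (auto intro!: subspaceI simp: scaleR_scaleC)
  have Mdiff: "a - b \<in> M" if "a \<in> M" "b \<in> M" for a b
  proof -
    have "(-1::complex) *\<^sub>C b = - b" using scaleR_scaleC[of "-1" b] by simp
    then show ?thesis using csub_comb[OF M1(2) that(1) that(2), of "-1"] by simp
  qed
  have Jdiff: "J (a - b) = J a - J b" for a b using Jbl by (simp add: linear_simps)
  have Nc: "closed N"
  proof -
    have "complete M" using Mc by (simp add: complete_eq_closed)
    moreover have "\<forall>x\<in>M. norm (J x) \<ge> (1 / (2*C)) * norm x"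
      using C0 bound by (auto simp: field_simps)
    moreover have "0 < 1 / (2*C)" using C0 by simp
    ultimately have "complete (J ` M)"
      using complete_isometric_image[OF _ Mrs Jbl] by blast
    then show ?thesis unfolding N_def by (simp add: complete_eq_closed)
  qed
  have inj: "inj_on J M"
  proof (rule inj_onI)
    fix a b assume "a \<in> M" "b \<in> M" "J a = J b"
    then have "norm (a - b) \<le> 0" using bound[OF Mdiff] Jdiff by (metis diff_self norm_zero mult_zero_right)
    then show "a = b" by simp
  qed
  define G where "G = the_inv_into M J"
  have "homeomorphism M N J G"
    unfolding homeomorphism_def
  proof (intro conjI ballI)
    fix x assume "x \<in> M" then show "G (J x) = x" unfolding G_def using inj by (simp add: the_inv_into_f_f)
  next
    show "J ` M = N" unfolding N_def ..
  next
    show "continuous_on M J" by (rule linear_continuous_on[OF Jbl])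
  next
    fix y assume "y \<in> N" then show "J (G y) = y" unfolding G_def N_def using inj by (simp add: f_the_inv_into_f)
  next
    show "G ` N = M" unfolding G_def N_def using inj by (simp add: the_inv_into_onto)
  next
    show "continuous_on N G"
    proof (rule lipschitz_on_continuous_on[of "2*C"], rule lipschitz_onI)
      fix a b assume "a \<in> N" "b \<in> N"
      then obtain x y where xy: "x \<in> M" "y \<in> M" "a = J x" "b = J y" unfolding N_def by blast
      have "G a = x" "G b = y" unfolding G_def xy using inj xy by (simp_all add: the_inv_into_f_f)
      then show "dist (G a) (G b) \<le> 2 * C * dist a b"
        using bound[OF Mdiff[OF xy(1,2)]] Jdiff xy by (simp add: dist_norm)
    qed (use C0 in simp)
  qed
  then have "top_isomorphic M N" unfolding top_isomorphic_def using Jadd Jsc by blast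
  then show ?thesis using M1 Mc Nsub Nc by blast
qed

end
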